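(* Fix $t>0$ and $D\ge1$. The following are equivalent: (a) for all finite $X,Y,Z\subset\mathbb{R}^D$, $d^t_{Mag}(X,Y)+d^t_{Mag}(Y,Z)\ge d^t_{Mag}(X,Z)$; (b) magnitude at scale $t$ is submodular on finite subsets of $\mathbb{R}^D$, i.e. $\mathrm{Mag}(tA)+\mathrm{Mag}(tB)\ge\mathrm{Mag}(t(A\cup B))+\mathrm{Mag}(t(A\cap B))$ for all finite $A,B\subset\mathbb{R}^D$. Moreover, the magnitude distance does not satisfy the triangle inequality in general: there exist $D$, $t>0$ and finite $X,Y,Z\subset\mathbb{R}^D$ with $d^t_{Mag}(X,Y)+d^t_{Mag}(Y,Z)<d^t_{Mag}(X,Z)$.
   Context: For a finite set $A\subset\mathbb{R}^D$ and $t>0$, the matrix $\zeta_{tA}(x,y)=\exp(-t\|x-y\|)$ ($x,y\in A$) is invertible and $\mathrm{Mag}(tA)=\mathbb{1}^\top\zeta_{tA}^{-1}\mathbb{1}$, with $\mathrm{Mag}(t\emptyset)=0$. The magnitude distance is $d^t_{Mag}(X,Y)=2\,\mathrm{Mag}(t(X\cup Y))-\mathrm{Mag}(tX)-\mathrm{Mag}(tY)$. *)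

theory Defs
  imports "HOL-Analysis.Analysis" "Jordan_Normal_Form.Gauss_Jordan_Elimination"
begin

text \<open>Points of R^D are represented as real lists of length D (so that the
dimension D can be quantified inside a single statement).\<close>

definition pts :: "nat \<Rightarrow> real list set \<Rightarrow> bool" where
  "pts D A \<longleftrightarrow> finite A \<and> (\<forall>x\<in>A. length x = D)"

definition ldist :: "real list \<Rightarrow> real list \<Rightarrow> real" where
  "ldist x y = sqrt (\<Sum>i<length x. (x ! i - y ! i)^2)"

text \<open>An enumeration of a finite set (the result below does not depend on it).\<close>
definition enum_set :: "real list set \<Rightarrow> real list list" where
  "enum_set A = (SOME xs. distinct xs \<and> set xs = A)"

definition zeta_mat :: "real \<Rightarrow> real list set \<Rightarrow> real mat" where
  "zeta_mat t A = (let xs = enum_set A; n = length xs in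
     mat n n (\<lambda>(i,j). exp (- t * ldist (xs ! i) (xs ! j))))"

definition Mag :: "real \<Rightarrow> real list set \<Rightarrow> real" where
  "Mag t A = (if A = {} then 0 else
     (let Z = zeta_mat t A; W = the (mat_inverse Z) in
       \<Sum>i<dim_row Z. \<Sum>j<dim_col Z. W $$ (i,j)))"

definition dMag :: "real \<Rightarrow> real list set \<Rightarrow> real list set \<Rightarrow> real" where
  "dMag t X Y = 2 * Mag t (X \<union> Y) - Mag t X - Mag t Y"

end

theory Submission imports Defs "Jordan_Normal_Form.Determinant" begin

definition KK :: "real \<Rightarrow> real list \<Rightarrow> real list \<Rightarrow> real" where
  "KK t a b = exp (- t * ldist a b)"

definition nondeg :: "real \<Rightarrow> real list set \<Rightarrow> bool" where
  "nondeg t A \<longleftrightarrow> (\<forall>v. (\<forall>a\<in>A. (\<Sum>b\<in>A. KK t a b * v b) = 0) \<longrightarrow> (\<forall>a\<in>A. v a = 0))"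

definition weighting :: "real \<Rightarrow> real list set \<Rightarrow> (real list \<Rightarrow> real) \<Rightarrow> bool" where
  "weighting t A w \<longleftrightarrow> (\<forall>a\<in>A. (\<Sum>b\<in>A. KK t a b * w b) = 1)"

lemma enum_set_props:
  assumes "finite A"
  shows "distinct (enum_set A) \<and> set (enum_set A) = A"
  unfolding enum_set_def
  by (rule someI_ex) (use finite_distinct_list[OF assms] in auto)

definition idx :: "'a list \<Rightarrow> 'a \<Rightarrow> nat" where
  "idx xs b = the_inv_into {..<length xs} (nth xs) b"

lemma inj_nth_distinct: "distinct xs \<Longrightarrow> inj_on (nth xs) {..<length xs}"
  by (auto simp: inj_on_def nth_eq_iff_index_eq)

lemma idx_nth: "distinct xs \<Longrightarrow> j < length xs \<Longrightarrow> idx xs (xs ! j) = j"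
  unfolding idx_def by (rule the_inv_into_f_f) (auto simp: inj_nth_distinct)

lemma idx_props: assumes "distinct xs" "b \<in> set xs"
  shows "idx xs b < length xs" "xs ! idx xs b = b"
proof -
  have im: "b \<in> nth xs ` {..<length xs}" using assms(2) by (auto simp: in_set_conv_nth)
  show "idx xs b < length xs" unfolding idx_def
    using the_inv_into_into[OF inj_nth_distinct[OF assms(1)] im] by auto
  show "xs ! idx xs b = b" unfolding idx_def
    using f_the_inv_into_f[OF inj_nth_distinct[OF assms(1)] im] .
qed

lemma sum_nth_distinct:
  assumes "distinct xs"
  shows "(\<Sum>j<length xs. g (xs ! j)) = (\<Sum>b\<in>set xs. g b)"
proof -
  have "(\<Sum>b\<in>set xs. g b) = sum_list (map g xs)"
    by (rule sum_list_distinct_conv_sum_set[OF assms, symmetric])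
  also have "\<dots> = (\<Sum>j<length xs. g (xs ! j))"
    by (simp add: sum_list_sum_nth atLeast0LessThan)
  finally show ?thesis by simp
qed

lemma Mag_core:
  assumes fin: "finite A" and ne: "A \<noteq> {}" and nd: "nondeg t A"
  shows "(\<exists>w. weighting t A w) \<and> (\<forall>w. weighting t A w \<longrightarrow> Mag t A = (\<Sum>a\<in>A. w a))"
proof -
  define xs where "xs = enum_set A"
  have dx: "distinct xs" and sx: "set xs = A" using enum_set_props[OF fin] xs_def by auto
  define n where "n = length xs"
  define Z where "Z = zeta_mat t A"
  have Zdef: "Z = mat n n (\<lambda>(i,j). KK t (xs ! i) (xs ! j))"
    unfolding Z_def zeta_mat_def xs_def n_def KK_def Let_def by simp
  have Zc: "Z \<in> carrier_mat n n" unfolding Zdef by simp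
  have Zv: "vec_index (Z *\<^sub>v v) i = (\<Sum>b\<in>A. KK t (xs ! i) b * vec_index v (idx xs b))"
    if "i < n" "v \<in> carrier_vec n" for i v
  proof -
    have "vec_index (Z *\<^sub>v v) i = (\<Sum>j<n. KK t (xs ! i) (xs ! j) * vec_index v j)"
      using that unfolding Zdef by (simp add: scalar_prod_def atLeast0LessThan row_def)
    also have "\<dots> = (\<Sum>j<n. KK t (xs ! i) (xs ! j) * vec_index v (idx xs (xs ! j)))"
      by (rule sum.cong) (auto simp: idx_nth dx n_def)
    also have "\<dots> = (\<Sum>b\<in>A. KK t (xs ! i) b * vec_index v (idx xs b))"
      unfolding n_def using sum_nth_distinct[OF dx, of "\<lambda>b. KK t (xs ! i) b * vec_index v (idx xs b)"] sx by simp
    finally show ?thesis .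
  qed
  have "Determinant.det Z \<noteq> 0"
  proof
    assume "Determinant.det Z = 0"
    then obtain v where v: "v \<in> carrier_vec n" "v \<noteq> 0\<^sub>v n" "Z *\<^sub>v v = 0\<^sub>v n"
      using det_0_iff_vec_prod_zero[OF Zc] by auto
    have "\<forall>a\<in>A. (\<Sum>b\<in>A. KK t a b * vec_index v (idx xs b)) = 0"
    proof
      fix a assume a: "a \<in> A"
      then have i: "idx xs a < n" "xs ! idx xs a = a" using sx n_def idx_props[OF dx] by auto
      have "vec_index (Z *\<^sub>v v) (idx xs a) = 0" using v i by simp
      then show "(\<Sum>b\<in>A. KK t a b * vec_index v (idx xs b)) = 0" using Zv[OF i(1) v(1)] i by simp
    qed
    then have z: "\<forall>a\<in>A. vec_index v (idx xs a) = 0"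
      using nd[unfolded nondeg_def, THEN spec[of _ "\<lambda>b. vec_index v (idx xs b)"]] by blast
    have "v = 0\<^sub>v n"
    proof (rule eq_vecI)
      fix j assume "j < dim_vec (0\<^sub>v n)"
      then have j: "j < n" by simp
      then have "xs ! j \<in> A" using sx n_def idx_props[OF dx] by auto
      then show "vec_index v j = vec_index (0\<^sub>v n) j" using z j dx n_def idx_nth by fastforce
    qed (use v in auto)
    with v show False by simp
  qed
  then have U: "Z \<in> Units (ring_mat TYPE(real) n ())"
    by (rule det_non_zero_imp_unit[OF Zc])
  then obtain W where W: "mat_inverse Z = Some W"
    using mat_inverse(1)[OF Zc, of "()"] U by (cases "mat_inverse Z") auto
  then have ZW: "Z * W = 1\<^sub>m n" and WZ: "W * Z = 1\<^sub>m n" and Wc: "W \<in> carrier_mat n n"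
    using mat_inverse(2)[OF Zc] by auto
  define one where "one = (Matrix.vec n (\<lambda>_. 1) :: real vec)"
  have onec: "one \<in> carrier_vec n" unfolding one_def by simp
  define u where "u = W *\<^sub>v one"
  have uc: "u \<in> carrier_vec n" unfolding u_def using Wc onec by (metis mult_mat_vec_carrier)
  have Zu: "Z *\<^sub>v u = one"
    unfolding u_def using ZW Zc Wc onec by (metis assoc_mult_mat_vec one_mult_mat_vec)
  have MagW: "Mag t A = (\<Sum>i<n. vec_index u i)"
  proof -
    have "Mag t A = (\<Sum>i<n. \<Sum>j<n. W $$ (i,j))"
      using ne W unfolding Mag_def Z_def[symmetric] Let_def using Zc by simp
    also have "\<dots> = (\<Sum>i<n. vec_index u i)"
      unfolding u_def one_def using Wc by (intro sum.cong) (auto simp: scalar_prod_def atLeast0LessThan row_def)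
    finally show ?thesis .
  qed
  show ?thesis
  proof
    show "\<exists>w. weighting t A w"
    proof
      show "weighting t A (\<lambda>b. vec_index u (idx xs b))"
        unfolding weighting_def
      proof
        fix a assume a: "a \<in> A"
        then have i: "idx xs a < n" "xs ! idx xs a = a" using sx n_def idx_props[OF dx] by auto
        have "vec_index (Z *\<^sub>v u) (idx xs a) = 1" using Zu i onec unfolding one_def by simp
        then show "(\<Sum>b\<in>A. KK t a b * vec_index u (idx xs b)) = 1" using Zv[OF i(1) uc] i by simp
      qed
    qed
    show "\<forall>w. weighting t A w \<longrightarrow> Mag t A = (\<Sum>a\<in>A. w a)"
    proof (intro allI impI)
      fix w assume w: "weighting t A w"
      define y where "y = Matrix.vec n (\<lambda>i. w (xs ! i))"
      have yc: "y \<in> carrier_vec n" unfolding y_def by simp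
      have "Z *\<^sub>v y = one"
      proof (rule eq_vecI)
        fix i assume "i < dim_vec one"
        then have i: "i < n" unfolding one_def by simp
        then have xi: "xs ! i \<in> A" using sx n_def idx_props[OF dx] by auto
        have "vec_index (Z *\<^sub>v y) i = (\<Sum>b\<in>A. KK t (xs ! i) b * vec_index y (idx xs b))" using Zv[OF i yc] .
        also have "\<dots> = (\<Sum>b\<in>A. KK t (xs ! i) b * w b)"
          by (rule sum.cong) (auto simp: y_def sx[symmetric] n_def idx_props[OF dx])
        also have "\<dots> = 1" using w xi unfolding weighting_def by blast
        finally show "vec_index (Z *\<^sub>v y) i = vec_index one i" using i unfolding one_def by simp
      qed (use Zc onec in auto)
      then have "u = y"
        unfolding u_def using WZ Zc Wc yc by (metis assoc_mult_mat_vec one_mult_mat_vec)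
      then have "Mag t A = (\<Sum>i<n. w (xs ! i))" using MagW y_def by simp
      also have "\<dots> = (\<Sum>a\<in>A. w a)" using sum_nth_distinct[OF dx, of w] sx n_def by simp
      finally show "Mag t A = (\<Sum>a\<in>A. w a)" .
    qed
  qed
qed


definition QF :: "real \<Rightarrow> real list set \<Rightarrow> (real list \<Rightarrow> real) \<Rightarrow> real" where
  "QF t B v = (\<Sum>a\<in>B. \<Sum>b\<in>B. KK t a b * v a * v b)"

definition spd :: "real \<Rightarrow> real list set \<Rightarrow> bool" where
  "spd t B \<longleftrightarrow> (\<forall>v. 0 \<le> QF t B v \<and> (QF t B v = 0 \<longrightarrow> (\<forall>a\<in>B. v a = 0)))"

lemma ext_sum:
  fixes g w :: "'a \<Rightarrow> real"
  assumes "finite B" "A \<subseteq> B"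
  shows "(\<Sum>b\<in>B. g b * (if b \<in> A then w b else 0)) = (\<Sum>b\<in>A. g b * w b)"
proof -
  have "(\<Sum>b\<in>B. g b * (if b \<in> A then w b else 0)) = (\<Sum>b\<in>A. g b * (if b \<in> A then w b else 0))"
    by (rule sum.mono_neutral_right) (use assms finite_subset in auto)
  also have "\<dots> = (\<Sum>b\<in>A. g b * w b)" by simp
  finally show ?thesis .
qed

lemma spd_subset:
  assumes "finite B" "A \<subseteq> B" "spd t B"
  shows "spd t A"
  unfolding spd_def
proof
  fix v :: "real list \<Rightarrow> real"
  define v' where "v' = (\<lambda>x. if x \<in> A then v x else 0)"
  have "QF t B v' = (\<Sum>a\<in>B. (\<Sum>b\<in>B. KK t a b * v' b) * v' a)"
    unfolding QF_def by (intro sum.cong) (auto simp: sum_distrib_left sum_distrib_right mult_ac)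
  also have "\<dots> = (\<Sum>a\<in>B. (\<Sum>b\<in>A. KK t a b * v b) * v' a)"
    unfolding v'_def using ext_sum[OF assms(1,2)] by simp
  also have "\<dots> = (\<Sum>a\<in>A. (\<Sum>b\<in>A. KK t a b * v b) * v a)"
    unfolding v'_def using ext_sum[OF assms(1,2), of "\<lambda>a. (\<Sum>b\<in>A. KK t a b * v b)"] by (simp add: mult_ac)
  also have "\<dots> = QF t A v"
    unfolding QF_def by (intro sum.cong) (auto simp: sum_distrib_left sum_distrib_right mult_ac)
  finally have eq: "QF t B v' = QF t A v" .
  show "0 \<le> QF t A v \<and> (QF t A v = 0 \<longrightarrow> (\<forall>a\<in>A. v a = 0))"
  proof
    show "0 \<le> QF t A v" using assms(3) eq unfolding spd_def by metis
    show "QF t A v = 0 \<longrightarrow> (\<forall>a\<in>A. v a = 0)"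
    proof
      assume "QF t A v = 0"
      then have "\<forall>a\<in>B. v' a = 0" using assms(3) eq unfolding spd_def by metis
      then show "\<forall>a\<in>A. v a = 0" using assms(2) unfolding v'_def by (metis subsetD)
    qed
  qed
qed

lemma spd_nondeg:
  assumes "spd t A"
  shows "nondeg t A"
  unfolding nondeg_def
proof (intro allI impI)
  fix v assume h: "\<forall>a\<in>A. (\<Sum>b\<in>A. KK t a b * v b) = 0"
  have "QF t A v = (\<Sum>a\<in>A. v a * (\<Sum>b\<in>A. KK t a b * v b))"
    unfolding QF_def by (intro sum.cong) (auto simp: sum_distrib_left mult_ac)
  also have "\<dots> = 0" using h by simp
  finally show "\<forall>a\<in>A. v a = 0" using assms unfolding spd_def by blast
qed

lemma ldist_sym: "length a = length b \<Longrightarrow> ldist a b = ldist b a"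
  unfolding ldist_def by (simp add: power2_commute)

lemma Mag_nonneg_spd:
  assumes "finite B" "spd t B"
  shows "0 \<le> Mag t B"
proof (cases "B = {}")
  case True then show ?thesis by (simp add: Mag_def)
next
  case False
  obtain w where w: "weighting t B w" and M: "Mag t B = (\<Sum>a\<in>B. w a)"
    using Mag_core[OF assms(1) False spd_nondeg[OF assms(2)]] by blast
  have "QF t B w = (\<Sum>a\<in>B. w a * (\<Sum>b\<in>B. KK t a b * w b))"
    unfolding QF_def by (intro sum.cong) (auto simp: sum_distrib_left mult_ac)
  also have "\<dots> = (\<Sum>a\<in>B. w a)" using w unfolding weighting_def by simp
  finally show ?thesis using M assms(2) unfolding spd_def by metis
qed

lemma Mag_mono_spd:
  assumes fin: "finite B" and sub: "A \<subseteq> B" and sp: "spd t B"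
    and sym: "\<And>a b. a \<in> B \<Longrightarrow> b \<in> B \<Longrightarrow> KK t a b = KK t b a"
  shows "Mag t A \<le> Mag t B"
proof (cases "A = {}")
  case True then show ?thesis using Mag_nonneg_spd[OF fin sp] by (simp add: Mag_def)
next
  case False
  have finA: "finite A" using fin sub finite_subset by blast
  have BnE: "B \<noteq> {}" using False sub by blast
  obtain wB where wB: "weighting t B wB" and MB: "Mag t B = (\<Sum>a\<in>B. wB a)"
    using Mag_core[OF fin BnE spd_nondeg[OF sp]] by blast
  obtain wA where wA: "weighting t A wA" and MA: "Mag t A = (\<Sum>a\<in>A. wA a)"
    using Mag_core[OF finA False spd_nondeg[OF spd_subset[OF fin sub sp]]] by blast
  define v where "v = (\<lambda>x. if x \<in> A then wA x else 0)"
  define c where "c = (\<lambda>a. \<Sum>b\<in>B. KK t a b * v b)"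
  have cA: "c a = 1" if "a \<in> A" for a
    unfolding c_def v_def using ext_sum[OF fin sub, of "KK t a" wA] wA that unfolding weighting_def by simp
  have wB1: "(\<Sum>b\<in>B. KK t a b * wB b) = 1" if "a \<in> B" for a using wB that unfolding weighting_def by blast
  define d where "d = (\<lambda>x. wB x - v x)"
  have "QF t B d = (\<Sum>a\<in>B. d a * ((\<Sum>b\<in>B. KK t a b * wB b) - c a))"
    unfolding QF_def d_def c_def
    by (intro sum.cong) (auto simp: sum_distrib_left sum_subtractf[symmetric] algebra_simps)
  also have "\<dots> = (\<Sum>a\<in>B. d a * (1 - c a))" using wB1 by simp
  also have "\<dots> = (\<Sum>a\<in>B. wB a) - (\<Sum>a\<in>B. v a) - (\<Sum>a\<in>B. wB a * c a) + (\<Sum>a\<in>B. v a * c a)"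
    unfolding d_def by (simp add: algebra_simps sum_subtractf sum.distrib)
  also have "(\<Sum>a\<in>B. v a) = Mag t A"
    using ext_sum[OF fin sub, of "\<lambda>_. 1" wA] MA unfolding v_def by simp
  also have "(\<Sum>a\<in>B. v a * c a) = Mag t A"
  proof -
    have "(\<Sum>a\<in>B. v a * c a) = (\<Sum>a\<in>B. c a * (if a \<in> A then wA a else 0))"
      unfolding v_def by (simp add: mult_ac)
    also have "\<dots> = (\<Sum>a\<in>A. c a * wA a)" by (rule ext_sum[OF fin sub])
    also have "\<dots> = (\<Sum>a\<in>A. wA a)" using cA by simp
    finally show ?thesis using MA by simp
  qed
  also have "(\<Sum>a\<in>B. wB a * c a) = Mag t A"
  proof -
    have "(\<Sum>a\<in>B. wB a * c a) = (\<Sum>a\<in>B. \<Sum>b\<in>B. KK t a b * wB a * v b)"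
      unfolding c_def by (simp add: sum_distrib_left mult_ac)
    also have "\<dots> = (\<Sum>b\<in>B. \<Sum>a\<in>B. KK t a b * wB a * v b)" by (rule sum.swap)
    also have "\<dots> = (\<Sum>b\<in>B. v b * (\<Sum>a\<in>B. KK t b a * wB a))"
      by (intro sum.cong refl) (auto simp: sum_distrib_left mult_ac sym)
    also have "\<dots> = (\<Sum>b\<in>B. v b)" using wB1 by simp
    also have "\<dots> = Mag t A"
      using ext_sum[OF fin sub, of "\<lambda>_. 1" wA] MA unfolding v_def by simp
    finally show ?thesis .
  qed
  finally have "QF t B d = Mag t B - Mag t A" using MB by simp
  moreover have "0 \<le> QF t B d" using sp unfolding spd_def by blast
  ultimately show ?thesis by simp
qed


lemma pd1_real:
  fixes S :: "real set" and f :: "real \<Rightarrow> real" and t :: real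
  assumes t: "t > 0"
  shows "finite S \<Longrightarrow> S \<noteq> {} \<Longrightarrow>
    (\<Sum>x\<in>S. \<Sum>y\<in>S. exp (- t * \<bar>x - y\<bar>) * f x * f y) \<ge> (\<Sum>y\<in>S. exp (- t * \<bar>Min S - y\<bar>) * f y)^2
    \<and> ((\<Sum>x\<in>S. \<Sum>y\<in>S. exp (- t * \<bar>x - y\<bar>) * f x * f y) = 0 \<longrightarrow> (\<forall>x\<in>S. f x = 0))"
proof (induction "card S" arbitrary: S rule: less_induct)
  case less
  define m where "m = Min S"
  have mS: "m \<in> S" using less.prems m_def by simp
  have mle: "\<And>y. y \<in> S \<Longrightarrow> m \<le> y" using less.prems m_def by simp
  define S' where "S' = S - {m}"
  have finS': "finite S'" using less.prems S'_def by simp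
  have Sins: "S = insert m S'" "m \<notin> S'" using mS S'_def by auto
  define g where "g = (\<lambda>x y. exp (- t * \<bar>x - y\<bar>) * f x * f y)"
  define Q where "Q = (\<Sum>x\<in>S. \<Sum>y\<in>S. g x y)"
  define Q' where "Q' = (\<Sum>x\<in>S'. \<Sum>y\<in>S'. g x y)"
  have Qsplit: "Q = g m m + (\<Sum>y\<in>S'. g m y) + (\<Sum>x\<in>S'. g x m) + Q'"
    unfolding Q_def Q'_def using Sins finS' by (simp add: sum.distrib)
  show ?case
  proof (cases "S' = {}")
    case True
    then have "S = {m}" using Sins by simp
    then show ?thesis by (simp add: power2_eq_square)
  next
    case False
    define m' where "m' = Min S'"
    have m'S: "m' \<in> S'" using False finS' m'_def by simp
    have m'le: "\<And>y. y \<in> S' \<Longrightarrow> m' \<le> y" using False finS' m'_def by simp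
    have mm': "m < m'" using m'S Sins mle[of m'] by (auto simp: order.order_iff_strict)
    define q where "q = exp (- t * (m' - m))"
    have q0: "0 < q" unfolding q_def by simp
    have q1: "q < 1" unfolding q_def using t mm' by simp
    have kq: "exp (- t * \<bar>m - y\<bar>) = q * exp (- t * \<bar>m' - y\<bar>)" if "y \<in> S'" for y
    proof -
      have "m' \<le> y" using m'le that by simp
      then have "\<bar>m - y\<bar> = (m' - m) + \<bar>m' - y\<bar>" using mm' by simp
      then have "- t * \<bar>m - y\<bar> = - t * (m' - m) + - t * \<bar>m' - y\<bar>" by (simp only: ring_distribs)
      then show ?thesis unfolding q_def by (simp add: exp_add[symmetric])
    qed
    define s where "s = (\<Sum>y\<in>S'. exp (- t * \<bar>m' - y\<bar>) * f y)"
    have r1: "(\<Sum>y\<in>S'. g m y) = q * s * f m"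
    proof -
      have "(\<Sum>y\<in>S'. g m y) = (\<Sum>y\<in>S'. (q * f m) * (exp (- t * \<bar>m' - y\<bar>) * f y))"
        unfolding g_def by (rule sum.cong) (auto simp: mult_ac kq[simplified])
      then show ?thesis by (simp add: s_def sum_distrib_left mult_ac)
    qed
    have r2: "(\<Sum>x\<in>S'. g x m) = q * s * f m"
    proof -
      have "(\<Sum>x\<in>S'. g x m) = (\<Sum>y\<in>S'. g m y)"
        unfolding g_def by (intro sum.cong) (auto simp: abs_minus_commute mult_ac)
      then show ?thesis using r1 by simp
    qed
    have gmm: "g m m = f m ^ 2" unfolding g_def by (simp add: power2_eq_square)
    have QQ: "Q = f m ^ 2 + 2 * q * s * f m + Q'" using Qsplit r1 r2 gmm by simp
    have cardS': "card S' < card S" using Sins less.prems by simp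
    have IH: "Q' \<ge> s^2 \<and> (Q' = 0 \<longrightarrow> (\<forall>x\<in>S'. f x = 0))"
      using less.hyps[OF cardS' finS' False] unfolding Q'_def g_def s_def m'_def .
    have rhs: "(\<Sum>y\<in>S. exp (- t * \<bar>Min S - y\<bar>) * f y) = f m + q * s"
    proof -
      have "(\<Sum>y\<in>S'. exp (- t * \<bar>m - y\<bar>) * f y) = (\<Sum>y\<in>S'. q * (exp (- t * \<bar>m' - y\<bar>) * f y))"
        by (rule sum.cong) (auto simp: mult_ac kq[simplified])
      then show ?thesis
        unfolding m_def[symmetric] s_def using Sins finS' by (simp add: sum_distrib_left)
    qed
    have ident: "Q - (f m + q * s)^2 = (Q' - s^2) + s^2 * (1 - q^2)"
      using QQ by (simp add: power2_eq_square algebra_simps)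
    have ident2: "Q = (1 - q^2) * f m ^ 2 + (q * f m + s)^2 + (Q' - s^2)"
      using QQ by (simp add: power2_eq_square algebra_simps)
    have q2: "0 < 1 - q^2" proof -
      have "q * q < 1 * 1" using q0 q1 by (intro mult_strict_mono) auto
      then show ?thesis by (simp add: power2_eq_square)
    qed
    have ge: "Q \<ge> (f m + q * s)^2"
      using ident IH q2 by (smt (verit) mult_nonneg_nonneg zero_le_power2)
    have zero: "Q = 0 \<longrightarrow> (\<forall>x\<in>S. f x = 0)"
    proof
      assume Q0: "Q = 0"
      have a: "0 \<le> (1 - q^2) * f m ^ 2" using q2 by simp
      have b: "0 \<le> (q * f m + s)^2" by simp
      have c: "0 \<le> Q' - s^2" using IH by simp
      have "(1 - q^2) * f m ^ 2 = 0" using ident2 Q0 a b c by linarith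
      then have fm: "f m = 0" using q2 by simp
      then have "Q' = 0" using QQ Q0 by simp
      then show "\<forall>x\<in>S. f x = 0" using IH fm Sins by auto
    qed
    show ?thesis using ge zero rhs unfolding Q_def g_def by simp
  qed
qed


lemma ldist1: "length a = 1 \<Longrightarrow> length b = 1 \<Longrightarrow> ldist a b = \<bar>hd a - hd b\<bar>"
  unfolding ldist_def by (cases a; cases b) auto

lemma list1: "length a = 1 \<Longrightarrow> a = [hd a]"
  by (cases a) auto

lemma spd1:
  assumes t: "t > 0" and B: "pts 1 B"
  shows "spd t B"
  unfolding spd_def
proof
  fix v :: "real list \<Rightarrow> real"
  have fin: "finite B" and len: "\<And>a. a \<in> B \<Longrightarrow> length a = 1" using B unfolding pts_def by auto
  have inj: "inj_on hd B"
    by (rule inj_onI) (metis len list1)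
  define f where "f = (\<lambda>x. v [x])"
  define S where "S = hd ` B"
  have vf: "v a = f (hd a)" if "a \<in> B" for a unfolding f_def using list1[OF len[OF that]] by simp
  have QF: "QF t B v = (\<Sum>x\<in>S. \<Sum>y\<in>S. exp (- t * \<bar>x - y\<bar>) * f x * f y)"
  proof -
    have "(\<Sum>x\<in>S. \<Sum>y\<in>S. exp (- t * \<bar>x - y\<bar>) * f x * f y)
        = (\<Sum>a\<in>B. \<Sum>b\<in>B. exp (- t * \<bar>hd a - hd b\<bar>) * f (hd a) * f (hd b))"
      unfolding S_def by (simp add: sum.reindex[OF inj])
    also have "\<dots> = QF t B v"
      unfolding QF_def KK_def by (intro sum.cong refl) (simp add: ldist1 len vf)
    finally show ?thesis by simp
  qed
  show "0 \<le> QF t B v \<and> (QF t B v = 0 \<longrightarrow> (\<forall>a\<in>B. v a = 0))"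
  proof (cases "B = {}")
    case True then show ?thesis by (simp add: QF_def)
  next
    case False
    then have "finite S" "S \<noteq> {}" using fin S_def by auto
    from pd1_real[OF t this, of f] QF
    have "0 \<le> QF t B v" and z: "QF t B v = 0 \<longrightarrow> (\<forall>x\<in>S. f x = 0)"
      by (auto intro: order_trans[OF zero_le_power2])
    moreover have "QF t B v = 0 \<longrightarrow> (\<forall>a\<in>B. v a = 0)" using z vf S_def by auto
    ultimately show ?thesis by blast
  qed
qed

lemma KK_sym1: "pts 1 B \<Longrightarrow> a \<in> B \<Longrightarrow> b \<in> B \<Longrightarrow> KK t a b = KK t b a"
  unfolding KK_def pts_def using ldist_sym by metis

lemma Mag_mono1:
  assumes "t > 0" "pts 1 B" "A \<subseteq> B"
  shows "Mag t A \<le> Mag t B"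
  using Mag_mono_spd[OF _ assms(3) spd1[OF assms(1,2)]] KK_sym1[OF assms(2)] assms(2)
  unfolding pts_def by blast


definition PP :: "nat \<Rightarrow> real \<Rightarrow> real \<Rightarrow> real list" where
  "PP k x y = x # y # replicate k 0"

lemma ldistP: "ldist (PP k x1 y1) (PP k x2 y2) = sqrt ((x1 - x2)^2 + (y1 - y2)^2)"
  unfolding ldist_def PP_def by (simp add: sum.lessThan_Suc_shift del: sum.lessThan_Suc)

lemma y_bounds: "0 < exp (- (sqrt 3 * ln 2)) \<and> exp (- (sqrt 3 * ln 2)) < (1/3::real)"
proof -
  have s: "17/10 \<le> sqrt (3::real)"
    by (rule real_le_rsqrt) (simp add: power2_eq_square)
  have p: "(2::real) powr (17/10) \<le> 2 powr sqrt 3" by (rule powr_mono[OF s]) simp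
  have "(2 powr (17/10::real))^10 = 2 powr ((17/10) * 10)"
    by (simp add: powr_realpow[symmetric] powr_powr)
  also have "\<dots> = (2::real)^17" by (simp add: powr_realpow[symmetric])
  finally have e: "(2 powr (17/10::real))^10 = 2^17" .
  have "(3::real) < 2 powr (17/10)"
  proof (rule ccontr)
    assume "\<not> (3::real) < 2 powr (17/10)"
    then have "2 powr (17/10::real) \<le> 3" by simp
    then have "(2 powr (17/10::real))^10 \<le> 3^10" by (rule power_mono) simp
    with e show False by simp
  qed
  with p have "3 < (2::real) powr sqrt 3" by linarith
  then have "3 < exp (sqrt 3 * ln 2)" by (simp add: powr_def)
  then have "exp (- (sqrt 3 * ln 2)) < 1/3" by (simp add: exp_minus field_simps)
  then show ?thesis by simp
qed


lemma KK_self: "KK t x x = 1"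
  unfolding KK_def ldist_def by simp

lemma counterex:
  fixes t :: real and k :: nat
  assumes t: "t > 0"
  shows "\<exists>A B. pts (k+2) A \<and> pts (k+2) B \<and> Mag t A + Mag t B < Mag t (A \<union> B) + Mag t (A \<inter> B)"
proof -
  define a where "a = ln 2 / t"
  have a0: "a > 0" using t by (simp add: a_def)
  have ta: "t * a = ln 2" using t by (simp add: a_def)
  define h where "h = a * sqrt 3 / 2"
  have h0: "h > 0" using a0 by (simp add: h_def)
  define y where "y = exp (- (sqrt 3 * ln 2))"
  have y0: "0 < y" and y1: "y < 1/3" using y_bounds y_def by auto
  define p where "p = PP k 0 0"
  define r where "r = PP k a 0"
  define q where "q = PP k (a/2) h"
  define s where "s = PP k (a/2) (-h)"
  have ne: "p \<noteq> q" "p \<noteq> r" "p \<noteq> s" "q \<noteq> r" "q \<noteq> s" "r \<noteq> s"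
           "q \<noteq> p" "r \<noteq> p" "s \<noteq> p" "r \<noteq> q" "s \<noteq> q" "s \<noteq> r"
    using a0 h0 by (auto simp: p_def q_def r_def s_def PP_def)
  have hh: "(a/2)^2 + h^2 = a^2" unfolding h_def by (simp add: power2_eq_square field_simps)
  have hh': "(a - a/2)^2 + h^2 = a^2" unfolding h_def by (simp add: power2_eq_square field_simps)
  have half: "exp (- (t * a)) = 1/2" using ta by (simp add: exp_minus)
  have dpr: "ldist p r = a" "ldist r p = a" unfolding p_def r_def ldistP using a0 by simp_all
  have dpq: "ldist p q = a" "ldist q p = a" "ldist p s = a" "ldist s p = a"
    unfolding p_def q_def s_def ldistP using a0 hh by (simp_all add: power2_commute)
  have drq: "ldist r q = a" "ldist q r = a" "ldist r s = a" "ldist s r = a"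
    unfolding r_def q_def s_def ldistP using a0 hh' by (simp_all add: power2_commute)
  have dqs: "ldist q s = a * sqrt 3" "ldist s q = a * sqrt 3"
    unfolding q_def s_def ldistP using a0 h0 by (simp_all add: h_def)
  have K2: "KK t p r = 1/2" "KK t r p = 1/2" "KK t p q = 1/2" "KK t q p = 1/2" "KK t p s = 1/2" "KK t s p = 1/2"
     "KK t r q = 1/2" "KK t q r = 1/2" "KK t r s = 1/2" "KK t s r = 1/2"
    unfolding KK_def dpr dpq drq using half by simp_all
  have Ky: "KK t q s = y" "KK t s q = y"
    unfolding KK_def dqs y_def using ta by (simp_all add: mult.assoc[symmetric] mult.commute)
  note KKs = K2 Ky KK_self ne
  have fin: "finite {p,r}" "finite {p,q,r}" "finite {p,r,s}" "finite {p,q,r,s}" by simp_all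
  have nd2: "nondeg t {p,r}"
    unfolding nondeg_def
  proof (intro allI impI)
    fix v assume H: "\<forall>x\<in>{p,r}. (\<Sum>b\<in>{p,r}. KK t x b * v b) = 0"
    have "(\<Sum>b\<in>{p,r}. KK t p b * v b) = 0" "(\<Sum>b\<in>{p,r}. KK t r b * v b) = 0" using H by auto
    then have "v p + v r / 2 = 0" "v p / 2 + v r = 0" by (simp_all add: KKs)
    then show "\<forall>x\<in>{p,r}. v x = 0" by auto
  qed
  have nd3: "nondeg t {p,q,r}"
    unfolding nondeg_def
  proof (intro allI impI)
    fix v assume H: "\<forall>x\<in>{p,q,r}. (\<Sum>b\<in>{p,q,r}. KK t x b * v b) = 0"
    have "(\<Sum>b\<in>{p,q,r}. KK t p b * v b) = 0" "(\<Sum>b\<in>{p,q,r}. KK t q b * v b) = 0"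
      "(\<Sum>b\<in>{p,q,r}. KK t r b * v b) = 0" using H by auto
    then have "v p + v q / 2 + v r / 2 = 0" "v p / 2 + v q + v r / 2 = 0" "v p / 2 + v q / 2 + v r = 0"
      by (simp_all add: KKs)
    then show "\<forall>x\<in>{p,q,r}. v x = 0" by auto
  qed
  have nd3': "nondeg t {p,r,s}"
    unfolding nondeg_def
  proof (intro allI impI)
    fix v assume H: "\<forall>x\<in>{p,r,s}. (\<Sum>b\<in>{p,r,s}. KK t x b * v b) = 0"
    have "(\<Sum>b\<in>{p,r,s}. KK t p b * v b) = 0" "(\<Sum>b\<in>{p,r,s}. KK t r b * v b) = 0"
      "(\<Sum>b\<in>{p,r,s}. KK t s b * v b) = 0" using H by auto
    then have "v p + v r / 2 + v s / 2 = 0" "v p / 2 + v r + v s / 2 = 0" "v p / 2 + v r / 2 + v s = 0"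
      by (simp_all add: KKs)
    then show "\<forall>x\<in>{p,r,s}. v x = 0" by auto
  qed
  have nd4: "nondeg t {p,q,r,s}"
    unfolding nondeg_def
  proof (intro allI impI)
    fix v assume H: "\<forall>x\<in>{p,q,r,s}. (\<Sum>b\<in>{p,q,r,s}. KK t x b * v b) = 0"
    have "(\<Sum>b\<in>{p,q,r,s}. KK t p b * v b) = 0" "(\<Sum>b\<in>{p,q,r,s}. KK t q b * v b) = 0"
      "(\<Sum>b\<in>{p,q,r,s}. KK t r b * v b) = 0" "(\<Sum>b\<in>{p,q,r,s}. KK t s b * v b) = 0" using H by auto
    then have e: "v p + v q / 2 + v r / 2 + v s / 2 = 0" "v p / 2 + v q + v r / 2 + y * v s = 0"
      "v p / 2 + v q / 2 + v r + v s / 2 = 0" "v p / 2 + y * v q + v r / 2 + v s = 0"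
      by (simp_all add: KKs algebra_simps)
    have pr: "v r = v p" using e by linarith
    have "(1 - y) * (v q - v s) = 0" using e by (simp add: algebra_simps)
    then have qs: "v s = v q" using y1 by simp
    have "v q = - 3/2 * v p" using e pr qs by linarith
    have e5: "v p + (1 + y) * v q = 0" using e pr qs by (simp add: algebra_simps)
    then have "v p + (1 + y) * (- 3/2 * v p) = 0" using \<open>v q = - 3/2 * v p\<close> by simp
    then have "v p + 3 * (y * v p) = 0" by (simp add: algebra_simps)
    then have "v p * (1 + 3 * y) = 0" by (simp add: algebra_simps)
    then have "v p = 0" using y0 by (simp add: add_pos_pos)
    then show "\<forall>x\<in>{p,q,r,s}. v x = 0" using pr qs \<open>v q = - 3/2 * v p\<close> by auto
  qed
  have M2: "Mag t {p,r} = 4/3"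
  proof -
    have "weighting t {p,r} (\<lambda>_. 2/3)" unfolding weighting_def by (simp add: KKs)
    then show ?thesis using Mag_core[OF fin(1) _ nd2] by (simp add: KKs)
  qed
  have M3: "Mag t {p,q,r} = 3/2"
  proof -
    have "weighting t {p,q,r} (\<lambda>_. 1/2)" unfolding weighting_def by (simp add: KKs)
    then show ?thesis using Mag_core[OF fin(2) _ nd3] by (simp add: KKs)
  qed
  have M3': "Mag t {p,r,s} = 3/2"
  proof -
    have "weighting t {p,r,s} (\<lambda>_. 1/2)" unfolding weighting_def by (simp add: KKs)
    then show ?thesis using Mag_core[OF fin(3) _ nd3'] by (simp add: KKs)
  qed
  have M4: "Mag t {p,q,r,s} = (4 * y + 2) / (1 + 3 * y)"
  proof -
    define u where "u = 2 * y / (1 + 3 * y)"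
    define w where "w = 1 / (1 + 3 * y)"
    have d: "1 + 3 * y \<noteq> 0" using y0 by simp
    have r1: "3/2 * u + w = 1" using d y0 by (simp add: u_def w_def field_simps)
    have r2: "u + (1 + y) * w = 1"
    proof -
      have "u + (1 + y) * w = (2 * y + (1 + y)) / (1 + 3 * y)" by (simp add: u_def w_def add_divide_distrib)
      also have "2 * y + (1 + y) = 1 + 3 * y" by simp
      finally show ?thesis using d by simp
    qed
    have "weighting t {p,q,r,s} (\<lambda>x. if x = p \<or> x = r then u else w)"
      unfolding weighting_def using r1 r2 by (auto simp: KKs algebra_simps)
    then have "Mag t {p,q,r,s} = 2 * u + 2 * w" using Mag_core[OF fin(4) _ nd4] by (simp add: KKs)
    also have "\<dots> = (4 * y + 2) / (1 + 3 * y)" by (simp add: u_def w_def add_divide_distrib)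
    finally show ?thesis .
  qed
  have U: "{p,q,r} \<union> {p,r,s} = {p,q,r,s}" by auto
  have I: "{p,q,r} \<inter> {p,r,s} = {p,r}" using ne by auto
  have ineq: "3 < (4 * y + 2) / (1 + 3 * y) + 4/3"
  proof -
    have "5/3 < (4 * y + 2) / (1 + 3 * y)" using y0 y1 by (simp add: field_simps)
    then show ?thesis by linarith
  qed
  have pts: "pts (k+2) {p,q,r}" "pts (k+2) {p,r,s}"
    unfolding pts_def p_def q_def r_def s_def PP_def by simp_all
  show ?thesis
    by (rule exI[of _ "{p,q,r}"], rule exI[of _ "{p,r,s}"]) (use pts U I M2 M3 M3' M4 ineq in simp)
qed


lemma pts_Un: "pts D A \<Longrightarrow> pts D B \<Longrightarrow> pts D (A \<union> B)"
  unfolding pts_def by auto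

lemma pts_Int: "pts D A \<Longrightarrow> pts D (A \<inter> B)"
  unfolding pts_def by auto

lemma pts_sub: "pts D B \<Longrightarrow> A \<subseteq> B \<Longrightarrow> pts D A"
  unfolding pts_def using finite_subset by blast

lemma dMag_split: "dMag t A (A \<inter> B) + dMag t (A \<inter> B) B - dMag t A B = 2 * Mag t A + 2 * Mag t B - 2 * Mag t (A \<inter> B) - 2 * Mag t (A \<union> B)"
proof -
  have "A \<union> (A \<inter> B) = A" "(A \<inter> B) \<union> B = B" by auto
  then show ?thesis unfolding dMag_def by simp
qed

theorem lemmaB6:
  shows "(\<forall>t::real. \<forall>D::nat. t > 0 \<longrightarrow> D \<ge> 1 \<longrightarrow>
            ((\<forall>X Y Z. pts D X \<longrightarrow> pts D Y \<longrightarrow> pts D Z \<longrightarrow>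
                 dMag t X Y + dMag t Y Z \<ge> dMag t X Z)
             \<longleftrightarrow>
             (\<forall>A B. pts D A \<longrightarrow> pts D B \<longrightarrow>
                 Mag t A + Mag t B \<ge> Mag t (A \<union> B) + Mag t (A \<inter> B))))
       \<and> (\<exists>D::nat. \<exists>t::real. \<exists>X Y Z. D \<ge> 1 \<and> t > 0 \<and> pts D X \<and> pts D Y \<and> pts D Z \<and>
            dMag t X Y + dMag t Y Z < dMag t X Z)"
proof
  show "\<forall>t::real. \<forall>D::nat. t > 0 \<longrightarrow> D \<ge> 1 \<longrightarrow>
            ((\<forall>X Y Z. pts D X \<longrightarrow> pts D Y \<longrightarrow> pts D Z \<longrightarrow>
                 dMag t X Y + dMag t Y Z \<ge> dMag t X Z)
             \<longleftrightarrow>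
             (\<forall>A B. pts D A \<longrightarrow> pts D B \<longrightarrow>
                 Mag t A + Mag t B \<ge> Mag t (A \<union> B) + Mag t (A \<inter> B)))"
  proof (intro allI impI, rule iffI)
      fix t :: real and D :: nat
      assume t: "t > 0" and D: "D \<ge> 1" and a: "\<forall>X Y Z. pts D X \<longrightarrow> pts D Y \<longrightarrow> pts D Z \<longrightarrow> dMag t X Y + dMag t Y Z \<ge> dMag t X Z"
      show "\<forall>A B. pts D A \<longrightarrow> pts D B \<longrightarrow> Mag t A + Mag t B \<ge> Mag t (A \<union> B) + Mag t (A \<inter> B)"
      proof (intro allI impI)
        fix A B assume A: "pts D A" and B: "pts D B"
        have "dMag t A (A \<inter> B) + dMag t (A \<inter> B) B \<ge> dMag t A B"
          using a A B pts_Int[OF A] by blast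
        then show "Mag t A + Mag t B \<ge> Mag t (A \<union> B) + Mag t (A \<inter> B)"
          using dMag_split[of t A B] by linarith
      qed
    next
      fix t :: real and D :: nat
      assume t: "t > 0" and D: "D \<ge> 1" and b: "\<forall>A B. pts D A \<longrightarrow> pts D B \<longrightarrow> Mag t A + Mag t B \<ge> Mag t (A \<union> B) + Mag t (A \<inter> B)"
      show "\<forall>X Y Z. pts D X \<longrightarrow> pts D Y \<longrightarrow> pts D Z \<longrightarrow> dMag t X Y + dMag t Y Z \<ge> dMag t X Z"
      proof (cases "D = 1")
        case False
        then have "D = (D - 2) + 2" using D by simp
        then obtain A B where "pts D A" "pts D B" "Mag t A + Mag t B < Mag t (A \<union> B) + Mag t (A \<inter> B)"
          using counterex[OF t, of "D - 2"] by metis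
        with b have False by force
        then show ?thesis ..
      next
        case True
        show ?thesis
        proof (intro allI impI)
          fix X Y Z assume X: "pts D X" and Y: "pts D Y" and Z: "pts D Z"
          have XY: "pts 1 (X \<union> Y)" and YZ: "pts 1 (Y \<union> Z)" using X Y Z True pts_Un by auto
          have s: "Mag t (X \<union> Y) + Mag t (Y \<union> Z) \<ge> Mag t ((X \<union> Y) \<union> (Y \<union> Z)) + Mag t ((X \<union> Y) \<inter> (Y \<union> Z))"
            using b XY YZ True by blast
          have m1: "Mag t (X \<union> Z) \<le> Mag t ((X \<union> Y) \<union> (Y \<union> Z))"
            by (rule Mag_mono1[OF t pts_Un[OF XY YZ]]) auto
          have m2: "Mag t Y \<le> Mag t ((X \<union> Y) \<inter> (Y \<union> Z))"
            by (rule Mag_mono1[OF t pts_Int[OF XY]]) auto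
          show "dMag t X Y + dMag t Y Z \<ge> dMag t X Z"
            unfolding dMag_def using s m1 m2 by linarith
        qed
      qed
  qed
next
  obtain A B where A: "pts (0+2) A" and B: "pts (0+2) B"
    and lt: "Mag 1 A + Mag 1 B < Mag 1 (A \<union> B) + Mag 1 (A \<inter> B)"
    using counterex[of 1 0] by auto
  have "dMag 1 A (A \<inter> B) + dMag 1 (A \<inter> B) B < dMag 1 A B"
    using dMag_split[of 1 A B] lt by linarith
  show "\<exists>D::nat. \<exists>t::real. \<exists>X Y Z. D \<ge> 1 \<and> t > 0 \<and> pts D X \<and> pts D Y \<and> pts D Z \<and>
            dMag t X Y + dMag t Y Z < dMag t X Z"
  proof (rule exI[of _ "2::nat"], rule exI[of _ "1::real"], rule exI[of _ A], rule exI[of _ "A \<inter> B"], rule exI[of _ B])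
    have A2: "pts 2 A" and B2: "pts 2 B" using A B by (simp_all add: numeral_2_eq_2)
    show "2 \<ge> (1::nat) \<and> (1::real) > 0 \<and> pts 2 A \<and> pts 2 (A \<inter> B) \<and> pts 2 B \<and>
      dMag 1 A (A \<inter> B) + dMag 1 (A \<inter> B) B < dMag 1 A B"
      using A2 B2 pts_Int[OF A2] \<open>dMag 1 A (A \<inter> B) + dMag 1 (A \<inter> B) B < dMag 1 A B\<close> by simp
  qed
qed

end
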